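(* Let $\alpha\in(0,1)$, let $\ell\ge1/\alpha$ be an integer with $\alpha\ell\in\mathbb N$, and let $n\ge\ell$. Let $C=C_{n,\ell,\alpha}$, $\pi$ the uniform distribution on $[n]^\ell$ and $L=I-C$. For every positive integer $r\le\ell/2$, there is a degree-2 sum-of-squares proof, in the formal variables $(F(X))_{X\in[n]^\ell}$ and from the axioms $\{0\le F(X)\le1\}_{X}\cup\mathcal{A}_{inv}$, of $$\langle F,LF\rangle_\pi\ \ge\ \big(1-(1-\alpha)^{r+1}\big)\Big[\mathbb{E}_\pi[F]-8^r\binom{\ell}{r}\sum_{j=0}^r\mathbb{E}_{Y\in[n]^j}\big[\delta_Y(F)^2\big]+\mathbb{E}_\pi[F^2-F]\Big].$$ In particular this holds for every permutation-invariant $F:[n]^\ell\to[0,1]$.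
   Context: Johnson-approximating graph $C_{n,\ell,\alpha}$ (for $\alpha\in(0,1)$, $\alpha\ell\in\mathbb N$, $n>\ell$): vertex set $[n]^\ell=(\mathbb Z/n\mathbb Z)^\ell$; a random neighbor of $X=(x_1,\dots,x_\ell)$ is $(x_1+b_1y_1,\dots,x_\ell+b_\ell y_\ell)$ where $y$ is uniform in $[n]^\ell$ and $b$ is uniform among vectors in $\{0,1\}^\ell$ of Hamming weight $\alpha\ell$; $C$ also denotes the corresponding transition (normalized adjacency) matrix. $\langle f,g\rangle_\pi=\mathbb{E}_{X\sim\pi}f(X)g(X)$. $F$ is permutation-invariant if $F(x_1,\dots,x_\ell)=F(x_{\sigma(1)},\dots,x_{\sigma(\ell)})$ for all $\sigma\in S_\ell$; $\mathcal{A}_{inv}$ is the set of these equalities. For $Y\in[n]^j$ ($0\le j\le\ell-1$), the restriction $F|_Y:[n]^{\ell-j}\to\mathbb R$ is $F|_Y(x)=F(Y,x)$ and $\delta_Y(F)=\mathbb{E}_{x\in[n]^{\ell-j}}F|_Y(x)$; for $j=0$, $\delta_\emptyset(F)=\mathbb{E}_\pi[F]$. A degree-$d$ SoS proof from axioms means the difference is a sum of squares plus combinations of the inequality axioms with SoS multipliers and of the equality axioms with arbitrary multipliers, all of degree $\le d$. *)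

theory Defs
  imports "HOL-Analysis.Analysis" "HOL-Combinatorics.Permutations"
begin

text \<open>Tuples in [n]^m = (Z/nZ)^m are represented as lists of length m with entries in {0..<n}.\<close>
definition tuples :: "nat \<Rightarrow> nat \<Rightarrow> nat list set" where
  "tuples n m = {xs. length xs = m \<and> set xs \<subseteq> {..<n}}"

definition avg :: "nat \<Rightarrow> nat \<Rightarrow> (nat list \<Rightarrow> real) \<Rightarrow> real" where
  "avg n m f = (\<Sum>X\<in>tuples n m. f X) / real (card (tuples n m))"

text \<open>Supports of the vectors b in {0,1}^l of Hamming weight alpha*l.\<close>
definition weight_sets :: "real \<Rightarrow> nat \<Rightarrow> nat set set" where
  "weight_sets \<alpha> l = {S. S \<subseteq> {..<l} \<and> real (card S) = \<alpha> * real l}"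

text \<open>The neighbour (x_i + b_i y_i)_i, with b the indicator of S.\<close>
definition shift :: "nat \<Rightarrow> nat \<Rightarrow> nat set \<Rightarrow> nat list \<Rightarrow> nat list \<Rightarrow> nat list" where
  "shift n l S X Y = map (\<lambda>i. if i \<in> S then (X ! i + Y ! i) mod n else X ! i) [0..<l]"

definition Cop :: "nat \<Rightarrow> nat \<Rightarrow> real \<Rightarrow> (nat list \<Rightarrow> real) \<Rightarrow> nat list \<Rightarrow> real" where
  "Cop n l \<alpha> F X =
     (\<Sum>S\<in>weight_sets \<alpha> l. \<Sum>Y\<in>tuples n l. F (shift n l S X Y))
       / (real (card (weight_sets \<alpha> l)) * real (card (tuples n l)))"

definition dirichlet :: "nat \<Rightarrow> nat \<Rightarrow> real \<Rightarrow> (nat list \<Rightarrow> real) \<Rightarrow> real" where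
  "dirichlet n l \<alpha> F = avg n l (\<lambda>X. F X * (F X - Cop n l \<alpha> F X))"

definition delta :: "nat \<Rightarrow> nat \<Rightarrow> (nat list \<Rightarrow> real) \<Rightarrow> nat list \<Rightarrow> real" where
  "delta n l F Y = avg n (l - length Y) (\<lambda>x. F (Y @ x))"

definition permute_tuple :: "nat \<Rightarrow> (nat \<Rightarrow> nat) \<Rightarrow> nat list \<Rightarrow> nat list" where
  "permute_tuple l \<sigma> X = map (\<lambda>i. X ! \<sigma> i) [0..<l]"

definition perm_invariant :: "nat \<Rightarrow> nat \<Rightarrow> (nat list \<Rightarrow> real) \<Rightarrow> bool" where
  "perm_invariant n l F \<longleftrightarrow>
     (\<forall>X\<in>tuples n l. \<forall>\<sigma>. \<sigma> permutes {..<l} \<longrightarrow> F X = F (permute_tuple l \<sigma> X))"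

text \<open>Degree-2 SoS proof of "P(F) >= 0" in the formal variables (F(X))_{X in [n]^l} from the
  axioms {0 <= F(X), F(X) <= 1}_X and A_inv:  P equals, as a polynomial (equivalently, as a
  function on all real assignments), a sum of squares of affine forms, plus nonnegative
  constant (degree-0 SoS) multiples of the degree-1 inequality axioms, plus affine (degree-1)
  multiples of the equality axioms F(X) - F(sigma X) = 0.\<close>
definition sos2_proof :: "nat \<Rightarrow> nat \<Rightarrow> ((nat list \<Rightarrow> real) \<Rightarrow> real) \<Rightarrow> bool" where
  "sos2_proof n l P \<longleftrightarrow>
    (\<exists>(m::nat) (a::nat \<Rightarrow> nat list \<Rightarrow> real) (c::nat \<Rightarrow> real)
        (lam::nat list \<Rightarrow> real) (mu::nat list \<Rightarrow> real)
        (q::nat list \<Rightarrow> (nat \<Rightarrow> nat) \<Rightarrow> nat list \<Rightarrow> real) (d::nat list \<Rightarrow> (nat \<Rightarrow> nat) \<Rightarrow> real).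
       (\<forall>X\<in>tuples n l. lam X \<ge> 0 \<and> mu X \<ge> 0) \<and>
       (\<forall>F::nat list \<Rightarrow> real.
          P F = (\<Sum>k<m. (c k + (\<Sum>Y\<in>tuples n l. a k Y * F Y))\<^sup>2)
              + (\<Sum>X\<in>tuples n l. lam X * F X + mu X * (1 - F X))
              + (\<Sum>X\<in>tuples n l. \<Sum>\<sigma>\<in>{\<sigma>. \<sigma> permutes {..<l}}.
                   (d X \<sigma> + (\<Sum>Y\<in>tuples n l. q X \<sigma> Y * F Y)) * (F X - F (permute_tuple l \<sigma> X)))))"

definition rhs_bound :: "nat \<Rightarrow> nat \<Rightarrow> real \<Rightarrow> nat \<Rightarrow> (nat list \<Rightarrow> real) \<Rightarrow> real" where
  "rhs_bound n l \<alpha> r F =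
     (1 - (1 - \<alpha>) ^ (r + 1)) *
     (avg n l F - 8 ^ r * real (l choose r) * (\<Sum>j=0..r. avg n j (\<lambda>Y. (delta n l F Y)\<^sup>2))
      + avg n l (\<lambda>X. (F X)\<^sup>2 - F X))"

end

theory Submission
  imports Defs
begin


definition repl :: "nat \<Rightarrow> nat set \<Rightarrow> nat list \<Rightarrow> nat list \<Rightarrow> nat list" where
  "repl l A X Y = map (\<lambda>i. if i \<in> A then Y ! i else X ! i) [0..<l]"

definition Pop :: "nat \<Rightarrow> nat \<Rightarrow> nat set \<Rightarrow> (nat list \<Rightarrow> real) \<Rightarrow> nat list \<Rightarrow> real" where
  "Pop n l A F X = (\<Sum>Y\<in>tuples n l. F (repl l A X Y)) / real (card (tuples n l))"

definition ip :: "nat \<Rightarrow> nat \<Rightarrow> (nat list \<Rightarrow> real) \<Rightarrow> (nat list \<Rightarrow> real) \<Rightarrow> real" where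
  "ip n l F G = (\<Sum>X\<in>tuples n l. F X * G X)"

lemma mem_tuples: "X \<in> tuples n l \<longleftrightarrow> length X = l \<and> (\<forall>i<l. X ! i < n)"
  unfolding tuples_def by (auto simp: in_set_conv_nth subset_iff)

lemma finite_tuples[simp]: "finite (tuples n l)"
proof -
  have "tuples n l = {xs. set xs \<subseteq> {..<n} \<and> length xs = l}" unfolding tuples_def by auto
  thus ?thesis using finite_lists_length_eq[of "{..<n}" l] by simp
qed

lemma card_tuples: "card (tuples n l) = n ^ l"
proof -
  have "tuples n l = {xs. set xs \<subseteq> {..<n} \<and> length xs = l}" unfolding tuples_def by auto
  thus ?thesis using card_lists_length_eq[of "{..<n}" l] by simp
qed

lemma length_repl[simp]: "length (repl l A X Y) = l"
  by (simp add: repl_def)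

lemma nth_repl[simp]: "i < l \<Longrightarrow> repl l A X Y ! i = (if i \<in> A then Y ! i else X ! i)"
  by (simp add: repl_def)

lemma repl_in: "X \<in> tuples n l \<Longrightarrow> Y \<in> tuples n l \<Longrightarrow> repl l A X Y \<in> tuples n l"
  by (auto simp: mem_tuples)

lemma repl_repl_swap: "X \<in> tuples n l \<Longrightarrow> Y \<in> tuples n l \<Longrightarrow>
   repl l A (repl l A X Y) (repl l A Y X) = X"
  by (rule nth_equalityI) (auto simp: mem_tuples)

lemma swap_bij: "bij_betw (\<lambda>(X,Y). (repl l A X Y, repl l A Y X))
   (tuples n l \<times> tuples n l) (tuples n l \<times> tuples n l)"
proof (rule bij_betw_byWitness[where f'="\<lambda>(X,Y). (repl l A X Y, repl l A Y X)"])
  show "\<forall>a\<in>tuples n l \<times> tuples n l.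
       (\<lambda>(X, Y). (repl l A X Y, repl l A Y X)) ((\<lambda>(X, Y). (repl l A X Y, repl l A Y X)) a) = a"
    using repl_repl_swap by auto
  then show "\<forall>a\<in>tuples n l \<times> tuples n l.
       (\<lambda>(X, Y). (repl l A X Y, repl l A Y X)) ((\<lambda>(X, Y). (repl l A X Y, repl l A Y X)) a) = a" .
qed (auto simp: repl_in)

lemma sum_swap_pairs:
  "(\<Sum>p\<in>tuples n l \<times> tuples n l. g p) =
   (\<Sum>p\<in>tuples n l \<times> tuples n l. g (repl l A (fst p) (snd p), repl l A (snd p) (fst p)))"
proof -
  have "(\<Sum>p\<in>tuples n l \<times> tuples n l. g p) =
     (\<Sum>p\<in>tuples n l \<times> tuples n l. g ((\<lambda>(X,Y). (repl l A X Y, repl l A Y X)) p))"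
    using sum.reindex_bij_betw[OF swap_bij[of l A n], of g] by simp
  also have "\<dots> = (\<Sum>p\<in>tuples n l \<times> tuples n l. g (repl l A (fst p) (snd p), repl l A (snd p) (fst p)))"
    by (rule sum.cong) (auto simp: case_prod_beta)
  finally show ?thesis .
qed

lemma sum_repl_double:
  "(\<Sum>Y\<in>tuples n l. \<Sum>Z\<in>tuples n l. h (repl l B Y Z)) = real (card (tuples n l)) * (\<Sum>Y\<in>tuples n l. h Y)"
proof -
  have "(\<Sum>Y\<in>tuples n l. \<Sum>Z\<in>tuples n l. h (repl l B Y Z)) =
     (\<Sum>p\<in>tuples n l \<times> tuples n l. h (repl l B (fst p) (snd p)))"
    by (simp add: sum.cartesian_product case_prod_beta)
  also have "\<dots> = (\<Sum>p\<in>tuples n l \<times> tuples n l. h (fst p))"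
    using sum_swap_pairs[of "\<lambda>p. h (fst p)" n l B] by simp
  also have "\<dots> = real (card (tuples n l)) * (\<Sum>Y\<in>tuples n l. h Y)"
    using sum.cartesian_product[of "\<lambda>Y Z. h Y" "tuples n l" "tuples n l"]
    by (simp add: case_prod_beta sum_distrib_left)
  finally show ?thesis .
qed

lemma repl_comp: "X \<in> tuples n l \<Longrightarrow> Y \<in> tuples n l \<Longrightarrow> Z \<in> tuples n l \<Longrightarrow>
  repl l B (repl l A X Y) Z = repl l (A \<union> B) X (repl l B Y Z)"
  by (rule nth_equalityI) auto

lemma Pop_comp:
  assumes X: "X \<in> tuples n l"
  shows "Pop n l A (Pop n l B F) X = Pop n l (A \<union> B) F X"
proof -
  let ?T = "tuples n l" let ?N = "real (card ?T)"
  have "Pop n l A (Pop n l B F) X = (\<Sum>Y\<in>?T. \<Sum>Z\<in>?T. F (repl l B (repl l A X Y) Z)) / ?N / ?N"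
    by (simp add: Pop_def sum_divide_distrib)
  also have "(\<Sum>Y\<in>?T. \<Sum>Z\<in>?T. F (repl l B (repl l A X Y) Z)) =
      (\<Sum>Y\<in>?T. \<Sum>Z\<in>?T. F (repl l (A \<union> B) X (repl l B Y Z)))"
    by (intro sum.cong refl) (subst repl_comp[OF X], auto)
  also have "\<dots> = ?N * (\<Sum>Y\<in>?T. F (repl l (A \<union> B) X Y))"
    by (rule sum_repl_double)
  finally show ?thesis
    by (cases "?N = 0") (simp_all add: Pop_def)
qed

lemma Pop_selfadj: "ip n l G (Pop n l A F) = ip n l (Pop n l A G) F"
proof -
  let ?T = "tuples n l" let ?N = "real (card ?T)"
  have "ip n l G (Pop n l A F) = (\<Sum>p\<in>?T \<times> ?T. G (fst p) * F (repl l A (fst p) (snd p))) / ?N"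
    by (simp add: ip_def Pop_def sum.cartesian_product sum_distrib_left sum_divide_distrib case_prod_beta)
  also have "(\<Sum>p\<in>?T \<times> ?T. G (fst p) * F (repl l A (fst p) (snd p))) =
     (\<Sum>p\<in>?T \<times> ?T. G (repl l A (fst p) (snd p)) * F (fst p))"
  proof -
    have "(\<Sum>p\<in>?T \<times> ?T. G (repl l A (fst p) (snd p)) * F (fst p)) =
      (\<Sum>p\<in>?T \<times> ?T. G (repl l A (repl l A (fst p) (snd p)) (repl l A (snd p) (fst p))) * F (repl l A (fst p) (snd p)))"
      using sum_swap_pairs[of "\<lambda>p. G (repl l A (fst p) (snd p)) * F (fst p)" n l A] by simp
    also have "\<dots> = (\<Sum>p\<in>?T \<times> ?T. G (fst p) * F (repl l A (fst p) (snd p)))"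
      by (rule sum.cong) (auto simp: repl_repl_swap)
    finally show ?thesis by simp
  qed
  also have "\<dots> / ?N = ip n l (Pop n l A G) F"
    by (simp add: ip_def Pop_def sum.cartesian_product sum_distrib_right sum_divide_distrib case_prod_beta)
  finally show ?thesis .
qed

lemma Pop_empty: assumes "X \<in> tuples n l" and "n > 0" shows "Pop n l {} F X = F X"
proof -
  have "repl l {} X Y = X" for Y using assms by (intro nth_equalityI) (auto simp: mem_tuples)
  moreover have "card (tuples n l) > 0" using assms by (simp add: card_tuples)
  moreover hence "tuples n l \<noteq> {}" by auto
  ultimately show ?thesis by (simp add: Pop_def)
qed

lemma Pop_cong: "(\<And>Z. Z \<in> tuples n l \<Longrightarrow> F Z = G Z) \<Longrightarrow> X \<in> tuples n l \<Longrightarrow> Pop n l A F X = Pop n l A G X"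
  unfolding Pop_def by (intro arg_cong2[where f="(/)"] sum.cong refl) (simp add: repl_in)

lemma Pop_sum: "Pop n l A (\<lambda>Z. \<Sum>b\<in>B. c b * H b Z) X = (\<Sum>b\<in>B. c b * Pop n l A (H b) X)"
  unfolding Pop_def by (simp add: sum_distrib_left sum_divide_distrib sum.swap[of _ B] mult.commute)



definition ES :: "nat \<Rightarrow> nat \<Rightarrow> nat set \<Rightarrow> (nat list \<Rightarrow> real) \<Rightarrow> nat list \<Rightarrow> real" where
  "ES n l U F X = (\<Sum>B\<in>Pow U. (-1) ^ card (U - B) * Pop n l ({..<l} - B) F X)"

lemma sum_Pow_pair:
  fixes g :: "'a set \<Rightarrow> real"
  assumes "finite U" "i \<in> U" "\<And>B. B \<subseteq> U - {i} \<Longrightarrow> g (insert i B) = - g B"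
  shows "(\<Sum>B\<in>Pow U. g B) = 0"
proof -
  let ?U' = "U - {i}"
  have U: "U = insert i ?U'" using assms by auto
  have "Pow U = Pow ?U' \<union> insert i ` Pow ?U'" by (subst U, rule Pow_insert)
  moreover have "Pow ?U' \<inter> insert i ` Pow ?U' = {}" by auto
  moreover have "inj_on (insert i) (Pow ?U')" by (rule inj_onI) blast
  ultimately have "(\<Sum>B\<in>Pow U. g B) = (\<Sum>B\<in>Pow ?U'. g B) + (\<Sum>B\<in>Pow ?U'. g (insert i B))"
    using assms(1) by (simp add: sum.union_disjoint sum.reindex)
  also have "(\<Sum>B\<in>Pow ?U'. g (insert i B)) = (\<Sum>B\<in>Pow ?U'. - g B)"
    using assms(3) by (intro sum.cong) auto
  finally show ?thesis by (simp add: sum_negf)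
qed

lemma Pop_lin2: "Pop n l A (\<lambda>Z. a * F Z + b * G Z) X = a * Pop n l A F X + b * Pop n l A G X"
  unfolding Pop_def by (simp add: sum.distrib sum_distrib_left add_divide_distrib)

lemma ip_sum_left: "ip n l (\<lambda>X. \<Sum>b\<in>B. c b * H b X) G = (\<Sum>b\<in>B. c b * ip n l (H b) G)"
  unfolding ip_def by (simp add: sum_distrib_left sum_distrib_right sum.swap[of _ B] mult.assoc)

lemma ip_sum_right: "ip n l G (\<lambda>X. \<Sum>b\<in>B. c b * H b X) = (\<Sum>b\<in>B. c b * ip n l G (H b))"
  unfolding ip_def by (simp add: sum_distrib_left sum_distrib_right sum.swap[of _ B] mult.left_commute)

lemma ip_sum_left1: "ip n l (\<lambda>X. \<Sum>b\<in>B. H b X) G = (\<Sum>b\<in>B. ip n l (H b) G)"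
  using ip_sum_left[of n l "\<lambda>_. 1" H B G] by simp

lemma ip_sum_right1: "ip n l G (\<lambda>X. \<Sum>b\<in>B. H b X) = (\<Sum>b\<in>B. ip n l G (H b))"
  using ip_sum_right[of n l G "\<lambda>_. 1" H B] by simp

lemma ip_comm: "ip n l F G = ip n l G F"
  unfolding ip_def by (simp add: mult.commute)

lemma ip_cong: "(\<And>X. X \<in> tuples n l \<Longrightarrow> F X = F' X) \<Longrightarrow> (\<And>X. X \<in> tuples n l \<Longrightarrow> G X = G' X) \<Longrightarrow>
   ip n l F G = ip n l F' G'"
  unfolding ip_def by (intro sum.cong) auto

lemma ES_selfadj: "ip n l (ES n l U F) G = ip n l F (ES n l U G)"
proof -
  have "ip n l (ES n l U F) G = (\<Sum>B\<in>Pow U. (-1) ^ card (U - B) * ip n l (Pop n l ({..<l} - B) F) G)"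
    unfolding ES_def by (rule ip_sum_left)
  also have "\<dots> = (\<Sum>B\<in>Pow U. (-1) ^ card (U - B) * ip n l F (Pop n l ({..<l} - B) G))"
    by (intro sum.cong refl) (metis Pop_selfadj ip_comm)
  also have "\<dots> = ip n l F (ES n l U G)"
    unfolding ES_def by (rule ip_sum_right[symmetric])
  finally show ?thesis .
qed

lemma ES_lin2: "ES n l U (\<lambda>Z. a * F Z + b * G Z) X = a * ES n l U F X + b * ES n l U G X"
  unfolding ES_def by (simp add: Pop_lin2 sum.distrib sum_distrib_left algebra_simps)

lemma Pop_ES:
  assumes A: "A \<subseteq> {..<l}" and U: "U \<subseteq> {..<l}" and X: "X \<in> tuples n l"
  shows "Pop n l A (ES n l U F) X = (if A \<inter> U = {} then ES n l U F X else 0)"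
proof -
  have fU: "finite U" using U finite_subset by blast
  have "Pop n l A (ES n l U F) X = (\<Sum>B\<in>Pow U. (-1) ^ card (U - B) * Pop n l A (Pop n l ({..<l} - B) F) X)"
    unfolding ES_def by (rule Pop_sum)
  also have "\<dots> = (\<Sum>B\<in>Pow U. (-1) ^ card (U - B) * Pop n l (A \<union> ({..<l} - B)) F X)"
    by (intro sum.cong refl arg_cong2[where f="(*)"] Pop_comp[OF X])
  finally have eq: "Pop n l A (ES n l U F) X = (\<Sum>B\<in>Pow U. (-1) ^ card (U - B) * Pop n l (A \<union> ({..<l} - B)) F X)" .
  show ?thesis
  proof (cases "A \<inter> U = {}")
    case True
    have "A \<union> ({..<l} - B) = {..<l} - B" if "B \<in> Pow U" for B using that A True by auto
    then have "(\<Sum>B\<in>Pow U. (-1) ^ card (U - B) * Pop n l (A \<union> ({..<l} - B)) F X) = ES n l U F X"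
      unfolding ES_def by (intro sum.cong refl) presburger
    then show ?thesis using True eq by presburger
  next
    case False
    then obtain i where i: "i \<in> A" "i \<in> U" by auto
    have "(\<Sum>B\<in>Pow U. (-1) ^ card (U - B) * Pop n l (A \<union> ({..<l} - B)) F X) = 0"
    proof (rule sum_Pow_pair[OF fU i(2)])
      fix B assume B: "B \<subseteq> U - {i}"
      have e1: "A \<union> ({..<l} - insert i B) = A \<union> ({..<l} - B)" using i by auto
      have "U - B = insert i (U - insert i B)" using B i by auto
      moreover have "finite (U - insert i B)" using fU by auto
      moreover have "i \<notin> U - insert i B" by auto
      ultimately have e2: "card (U - B) = Suc (card (U - insert i B))" by (metis card_insert_disjoint)
      show "(-1) ^ card (U - insert i B) * Pop n l (A \<union> ({..<l} - insert i B)) F X =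
          - ((-1) ^ card (U - B) * Pop n l (A \<union> ({..<l} - B)) F X)"
        unfolding e1 e2 by simp
    qed
    then show ?thesis using False eq by presburger
  qed
qed

lemma alt_sum_supsets:
  fixes l :: nat
  assumes "B \<subseteq> {..<l}"
  shows "(\<Sum>U\<in>Pow {..<l}. if B \<subseteq> U then (-1::real) ^ card (U - B) else 0) = (if B = {..<l} then 1 else 0)"
proof (cases "B = {..<l}")
  case True
  have "(\<Sum>U\<in>Pow {..<l}. if B \<subseteq> U then (-1::real) ^ card (U - B) else 0) =
        (\<Sum>U\<in>{B}. if B \<subseteq> U then (-1::real) ^ card (U - B) else 0)"
    by (rule sum.mono_neutral_right) (auto simp: True)
  then show ?thesis using True by simp
next
  case False
  then obtain i where i: "i \<in> {..<l}" "i \<notin> B" using assms by auto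
  have "(\<Sum>U\<in>Pow {..<l}. if B \<subseteq> U then (-1::real) ^ card (U - B) else 0) = 0"
  proof (rule sum_Pow_pair[OF _ i(1)])
    fix U assume U: "U \<subseteq> {..<l} - {i}"
    have "finite (U - B)" using U finite_subset by blast
    moreover have "insert i U - B = insert i (U - B)" "i \<notin> U - B" using i U by auto
    ultimately have "card (insert i U - B) = Suc (card (U - B))" by simp
    moreover have "(B \<subseteq> insert i U) = (B \<subseteq> U)" using i by auto
    ultimately show "(if B \<subseteq> insert i U then (-1::real) ^ card (insert i U - B) else 0) =
      - (if B \<subseteq> U then (-1) ^ card (U - B) else 0)" by simp
  qed simp
  then show ?thesis using False by simp
qed

lemma ES_alt:
  assumes "U \<subseteq> {..<l}"
  shows "ES n l U F X = (\<Sum>B\<in>Pow {..<l}. if B \<subseteq> U then (-1) ^ card (U - B) * Pop n l ({..<l} - B) F X else 0)"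
proof -
  have "(\<Sum>B\<in>Pow {..<l}. if B \<subseteq> U then (-1) ^ card (U - B) * Pop n l ({..<l} - B) F X else 0)
     = (\<Sum>B\<in>{B \<in> Pow {..<l}. B \<subseteq> U}. (-1) ^ card (U - B) * Pop n l ({..<l} - B) F X)"
    by (rule sum.inter_filter[symmetric]) simp
  moreover have "{B \<in> Pow {..<l}. B \<subseteq> U} = Pow U" using assms by auto
  ultimately show ?thesis unfolding ES_def by metis
qed

lemma ES_decomp:
  assumes X: "X \<in> tuples n l" and n: "n > 0"
  shows "(\<Sum>U\<in>Pow {..<l}. ES n l U F X) = F X"
proof -
  have "(\<Sum>U\<in>Pow {..<l}. ES n l U F X) =
     (\<Sum>U\<in>Pow {..<l}. \<Sum>B\<in>Pow {..<l}. if B \<subseteq> U then (-1) ^ card (U - B) * Pop n l ({..<l} - B) F X else 0)"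
    by (intro sum.cong refl) (simp add: ES_alt)
  also have "\<dots> = (\<Sum>B\<in>Pow {..<l}. \<Sum>U\<in>Pow {..<l}. if B \<subseteq> U then (-1) ^ card (U - B) * Pop n l ({..<l} - B) F X else 0)"
    by (rule sum.swap)
  also have "\<dots> = (\<Sum>B\<in>Pow {..<l}. Pop n l ({..<l} - B) F X * (\<Sum>U\<in>Pow {..<l}. if B \<subseteq> U then (-1) ^ card (U - B) else 0))"
    by (intro sum.cong refl) (auto simp: sum_distrib_left intro!: sum.cong)
  also have "\<dots> = (\<Sum>B\<in>Pow {..<l}. if B = {..<l} then Pop n l ({..<l} - B) F X else 0)"
    by (intro sum.cong refl) (simp add: alt_sum_supsets)
  also have "\<dots> = Pop n l {} F X" by simp
  also have "\<dots> = F X" using Pop_empty[OF X n] .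
  finally show ?thesis .
qed

lemma ES_orth:
  assumes U: "U \<subseteq> {..<l}" and V: "V \<subseteq> {..<l}" and ne: "U \<noteq> V"
  shows "ip n l (ES n l U F) (ES n l V G) = 0"
proof -
  have main: "ip n l (ES n l U F) (ES n l V G) = 0" if U: "U \<subseteq> {..<l}" and V: "V \<subseteq> {..<l}"
     and i: "i \<in> U" "i \<notin> V" for U V F G i
  proof -
    have iI: "{i} \<subseteq> {..<l}" using i U by auto
    have "ip n l (ES n l U F) (ES n l V G) = ip n l (ES n l U F) (Pop n l {i} (ES n l V G))"
      by (rule ip_cong) (use Pop_ES[OF iI V] i in auto)
    also have "\<dots> = ip n l (Pop n l {i} (ES n l U F)) (ES n l V G)" by (rule Pop_selfadj)
    also have "\<dots> = ip n l (\<lambda>_. 0) (ES n l V G)"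
      by (rule ip_cong) (use Pop_ES[OF iI U] i in auto)
    finally show ?thesis by (simp add: ip_def)
  qed
  from ne have "(\<exists>i. i \<in> U \<and> i \<notin> V) \<or> (\<exists>i. i \<in> V \<and> i \<notin> U)" by auto
  then show ?thesis
  proof
    assume "\<exists>i. i \<in> U \<and> i \<notin> V" then show ?thesis using main U V by blast
  next
    assume "\<exists>i. i \<in> V \<and> i \<notin> U" then show ?thesis using main[OF V U] ip_comm by metis
  qed
qed

lemma Pop_decomp:
  assumes A: "A \<subseteq> {..<l}" and X: "X \<in> tuples n l" and n: "n > 0"
  shows "Pop n l A F X = (\<Sum>U\<in>{U\<in>Pow {..<l}. U \<inter> A = {}}. ES n l U F X)"
proof -
  have "Pop n l A F X = Pop n l A (\<lambda>Z. \<Sum>U\<in>Pow {..<l}. 1 * ES n l U F Z) X"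
    by (rule Pop_cong) (use ES_decomp n X in auto)
  also have "\<dots> = (\<Sum>U\<in>Pow {..<l}. 1 * Pop n l A (ES n l U F) X)" by (rule Pop_sum)
  also have "\<dots> = (\<Sum>U\<in>Pow {..<l}. if U \<inter> A = {} then ES n l U F X else 0)"
    by (intro sum.cong refl) (use Pop_ES[OF A _ X] in \<open>auto simp: Int_commute\<close>)
  also have "\<dots> = (\<Sum>U\<in>{U\<in>Pow {..<l}. U \<inter> A = {}}. ES n l U F X)"
    by (rule sum.inter_filter[symmetric]) simp
  finally show ?thesis .
qed

definition wES :: "nat \<Rightarrow> nat \<Rightarrow> nat set \<Rightarrow> (nat list \<Rightarrow> real) \<Rightarrow> real" where
  "wES n l U F = ip n l (ES n l U F) (ES n l U F)"

lemma ip_Pop_decomp: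
  assumes A: "A \<subseteq> {..<l}" and n: "n > 0"
  shows "ip n l F (Pop n l A F) = (\<Sum>U\<in>{U\<in>Pow {..<l}. U \<inter> A = {}}. wES n l U F)"
proof -
  let ?S = "{U\<in>Pow {..<l}. U \<inter> A = {}}"
  have "ip n l F (Pop n l A F) = ip n l (\<lambda>X. \<Sum>V\<in>Pow {..<l}. 1 * ES n l V F X) (\<lambda>X. \<Sum>U\<in>?S. 1 * ES n l U F X)"
    by (rule ip_cong) (use ES_decomp Pop_decomp[OF A] n in auto)
  also have "\<dots> = (\<Sum>V\<in>Pow {..<l}. \<Sum>U\<in>?S. ip n l (ES n l V F) (ES n l U F))"
    by (simp add: ip_sum_left1 ip_sum_right1)
  also have "\<dots> = (\<Sum>U\<in>?S. \<Sum>V\<in>Pow {..<l}. ip n l (ES n l V F) (ES n l U F))"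
    by (rule sum.swap)
  also have "\<dots> = (\<Sum>U\<in>?S. \<Sum>V\<in>Pow {..<l}. if V = U then wES n l U F else 0)"
  proof (intro sum.cong refl)
    fix U V assume "U \<in> ?S" "V \<in> Pow {..<l}"
    then show "ip n l (ES n l V F) (ES n l U F) = (if V = U then wES n l U F else 0)"
      using ES_orth[of V l U n F F] by (auto simp: wES_def)
  qed
  also have "\<dots> = (\<Sum>U\<in>?S. wES n l U F)"
    by (intro sum.cong refl) auto
  finally show ?thesis .
qed



lemma modinv1: "x < n \<Longrightarrow> z < (n::nat) \<Longrightarrow> (x + (z + (n - x)) mod n) mod n = z"
  by (simp add: mod_add_right_eq)
lemma modinv2: "x < n \<Longrightarrow> y < (n::nat) \<Longrightarrow> ((x + y) mod n + (n - x)) mod n = y"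
proof -
  assume "x < n" "y < n"
  have "((x + y) mod n + (n - x)) mod n = (x + y + (n - x)) mod n" by (rule mod_add_left_eq)
  also have "x + y + (n - x) = y + n" using \<open>x < n\<close> by simp
  finally show ?thesis using \<open>y < n\<close> by simp
qed

definition addv :: "nat \<Rightarrow> nat \<Rightarrow> nat list \<Rightarrow> nat list \<Rightarrow> nat list" where
  "addv n l X Y = map (\<lambda>i. (X ! i + Y ! i) mod n) [0..<l]"
definition subv :: "nat \<Rightarrow> nat \<Rightarrow> nat list \<Rightarrow> nat list \<Rightarrow> nat list" where
  "subv n l X Y = map (\<lambda>i. (Y ! i + (n - X ! i)) mod n) [0..<l]"

lemma addv_bij:
  assumes X: "X \<in> tuples n l" and n: "n > 0"
  shows "bij_betw (addv n l X) (tuples n l) (tuples n l)"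
proof (rule bij_betw_byWitness[where f'="subv n l X"])
  show "\<forall>a\<in>tuples n l. subv n l X (addv n l X a) = a"
    using X by (auto simp: mem_tuples addv_def subv_def modinv2 intro!: nth_equalityI)
  show "\<forall>a\<in>tuples n l. addv n l X (subv n l X a) = a"
    using X by (auto simp: mem_tuples addv_def subv_def modinv1 intro!: nth_equalityI)
  show "addv n l X ` tuples n l \<subseteq> tuples n l" using n by (auto simp: mem_tuples addv_def)
  show "subv n l X ` tuples n l \<subseteq> tuples n l" using n by (auto simp: mem_tuples subv_def)
qed

lemma shift_repl: "shift n l S X Y = repl l S X (addv n l X Y)"
  by (simp add: shift_def repl_def addv_def)

lemma sum_shift:
  assumes X: "X \<in> tuples n l" and n: "n > 0"
  shows "(\<Sum>Y\<in>tuples n l. F (shift n l S X Y)) = real (card (tuples n l)) * Pop n l S F X"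
proof -
  have "(\<Sum>Y\<in>tuples n l. F (shift n l S X Y)) = (\<Sum>Y\<in>tuples n l. (\<lambda>Z. F (repl l S X Z)) (addv n l X Y))"
    by (simp add: shift_repl)
  also have "\<dots> = (\<Sum>Y\<in>tuples n l. F (repl l S X Y))"
    by (rule sum.reindex_bij_betw[OF addv_bij[OF X n]])
  finally show ?thesis using n by (simp add: Pop_def card_tuples)
qed

lemma Cop_Pop:
  assumes X: "X \<in> tuples n l" and n: "n > 0"
  shows "Cop n l \<alpha> F X = (\<Sum>S\<in>weight_sets \<alpha> l. Pop n l S F X) / real (card (weight_sets \<alpha> l))"
  using n by (simp add: Cop_def sum_shift[OF X n] sum_distrib_left[symmetric] card_tuples)

lemma finite_weight_sets: "finite (weight_sets \<alpha> l)"
proof -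
  have "weight_sets \<alpha> l \<subseteq> Pow {..<l}" by (auto simp: weight_sets_def)
  thus ?thesis by (rule finite_subset) simp
qed

definition mu :: "real \<Rightarrow> nat \<Rightarrow> nat set \<Rightarrow> real" where
  "mu \<alpha> l U = real (card {S\<in>weight_sets \<alpha> l. S \<inter> U = {}}) / real (card (weight_sets \<alpha> l))"

lemma ip_Cop:
  assumes n: "n > 0"
  shows "ip n l F (Cop n l \<alpha> F) = (\<Sum>U\<in>Pow {..<l}. wES n l U F * mu \<alpha> l U)"
proof -
  let ?W = "weight_sets \<alpha> l"
  have "ip n l F (Cop n l \<alpha> F) = ip n l F (\<lambda>X. \<Sum>S\<in>?W. (1 / real (card ?W)) * Pop n l S F X)"
    by (rule ip_cong) (simp_all add: Cop_Pop n sum_divide_distrib)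
  also have "\<dots> = (\<Sum>S\<in>?W. (1 / real (card ?W)) * ip n l F (Pop n l S F))"
    by (rule ip_sum_right)
  also have "\<dots> = (\<Sum>S\<in>?W. (1 / real (card ?W)) * (\<Sum>U\<in>Pow {..<l}. if U \<inter> S = {} then wES n l U F else 0))"
  proof (intro sum.cong refl arg_cong2[where f="(*)"])
    fix S assume S: "S \<in> ?W"
    then have SI: "S \<subseteq> {..<l}" by (auto simp: weight_sets_def)
    show "ip n l F (Pop n l S F) = (\<Sum>U\<in>Pow {..<l}. if U \<inter> S = {} then wES n l U F else 0)"
      unfolding ip_Pop_decomp[OF SI n] by (rule sum.inter_filter) simp
  qed
  also have "\<dots> = (\<Sum>U\<in>Pow {..<l}. \<Sum>S\<in>?W. (1 / real (card ?W)) * (if U \<inter> S = {} then wES n l U F else 0))"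
    by (simp add: sum_distrib_left sum.swap[of _ ?W])
  also have "\<dots> = (\<Sum>U\<in>Pow {..<l}. wES n l U F * mu \<alpha> l U)"
  proof (intro sum.cong refl)
    fix U
    have "(\<Sum>S\<in>?W. (1 / real (card ?W)) * (if U \<inter> S = {} then wES n l U F else 0))
       = (\<Sum>S\<in>?W. if S \<inter> U = {} then wES n l U F / real (card ?W) else 0)"
      by (intro sum.cong refl) (auto simp: Int_commute)
    also have "\<dots> = (\<Sum>S\<in>{S\<in>?W. S \<inter> U = {}}. wES n l U F / real (card ?W))"
      by (rule sum.inter_filter[symmetric]) (rule finite_weight_sets)
    also have "\<dots> = wES n l U F * mu \<alpha> l U" by (simp add: mu_def)
    finally show "(\<Sum>S\<in>?W. (1 / real (card ?W)) * (if U \<inter> S = {} then wES n l U F else 0)) = wES n l U F * mu \<alpha> l U" .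
  qed
  finally show ?thesis .
qed

lemma ip_self: assumes n: "n > 0" shows "ip n l F F = (\<Sum>U\<in>Pow {..<l}. wES n l U F)"
proof -
  have "ip n l F F = ip n l F (Pop n l {} F)"
    by (rule ip_cong) (simp_all add: Pop_empty n)
  also have "\<dots> = (\<Sum>U\<in>{U\<in>Pow {..<l}. U \<inter> {} = {}}. wES n l U F)"
    by (rule ip_Pop_decomp) (simp_all add: n)
  also have "{U\<in>Pow {..<l}. U \<inter> {} = {}} = Pow {..<l}" by auto
  finally show ?thesis .
qed


lemma app_bij:
  assumes j: "j \<le> l"
  shows "bij_betw (\<lambda>(Y,x). Y @ x) (tuples n j \<times> tuples n (l - j)) (tuples n l)"
  by (rule bij_betw_byWitness[where f'="\<lambda>Z. (take j Z, drop j Z)"]) (use j in \<open>auto simp: mem_tuples nth_append\<close>)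


lemma sum_app:
  assumes j: "j \<le> l"
  shows "(\<Sum>Z\<in>tuples n l. g Z) = (\<Sum>Y\<in>tuples n j. \<Sum>x\<in>tuples n (l - j). g (Y @ x))"
proof -
  have "(\<Sum>Z\<in>tuples n l. g Z) = (\<Sum>p\<in>tuples n j \<times> tuples n (l - j). g ((\<lambda>(Y,x). Y @ x) p))"
    by (rule sum.reindex_bij_betw[OF app_bij[OF j], symmetric])
  also have "\<dots> = (\<Sum>Y\<in>tuples n j. \<Sum>x\<in>tuples n (l - j). g (Y @ x))"
    by (simp add: sum.cartesian_product case_prod_beta)
  finally show ?thesis .
qed

lemma repl_take_drop:
  assumes "X \<in> tuples n l" "Z \<in> tuples n l" "j \<le> l"
  shows "repl l ({..<l} - {..<j}) X Z = take j X @ drop j Z"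
  using assms by (intro nth_equalityI) (auto simp: mem_tuples nth_append min_def)

lemma Pop_delta:
  assumes X: "X \<in> tuples n l" and j: "j \<le> l" and n: "n > 0"
  shows "Pop n l ({..<l} - {..<j}) F X = delta n l F (take j X)"
proof -
  have lt: "length (take j X) = j" using X j by (simp add: mem_tuples)
  have "(\<Sum>Z\<in>tuples n l. F (repl l ({..<l} - {..<j}) X Z)) = (\<Sum>Z\<in>tuples n l. F (take j X @ drop j Z))"
    by (intro sum.cong refl) (metis repl_take_drop[OF X _ j])
  also have "\<dots> = (\<Sum>Y\<in>tuples n j. \<Sum>x\<in>tuples n (l - j). F (take j X @ drop j (Y @ x)))"
    by (rule sum_app[OF j])
  also have "\<dots> = (\<Sum>Y\<in>tuples n j. \<Sum>x\<in>tuples n (l - j). F (take j X @ x))"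
    by (intro sum.cong refl) (simp add: mem_tuples)
  also have "\<dots> = real (n ^ j) * (\<Sum>x\<in>tuples n (l - j). F (take j X @ x))"
    by (simp add: card_tuples)
  finally have e: "(\<Sum>Z\<in>tuples n l. F (repl l ({..<l} - {..<j}) X Z)) = real (n ^ j) * (\<Sum>x\<in>tuples n (l - j). F (take j X @ x))" .
  have nl: "real (n ^ l) = real (n ^ j) * real (n ^ (l - j))"
    using j by (simp add: power_add[symmetric])
  show ?thesis
    unfolding Pop_def delta_def avg_def e lt card_tuples nl using n by simp
qed

lemma avg_delta:
  assumes j: "j \<le> l" and n: "n > 0"
  shows "avg n j (\<lambda>Y. (delta n l F Y)\<^sup>2) = ip n l F (Pop n l ({..<l} - {..<j}) F) / real (card (tuples n l))"
proof -
  let ?A = "{..<l} - {..<j}"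
  have "ip n l (Pop n l ?A F) (Pop n l ?A F) = (\<Sum>X\<in>tuples n l. (delta n l F (take j X))\<^sup>2)"
    unfolding ip_def by (intro sum.cong refl) (simp only: Pop_delta[OF _ j n] power2_eq_square)
  also have "\<dots> = (\<Sum>Y\<in>tuples n j. \<Sum>x\<in>tuples n (l - j). (delta n l F (take j (Y @ x)))\<^sup>2)"
    by (rule sum_app[OF j])
  also have "\<dots> = (\<Sum>Y\<in>tuples n j. \<Sum>x\<in>tuples n (l - j). (delta n l F Y)\<^sup>2)"
    by (intro sum.cong refl) (simp add: mem_tuples)
  also have "\<dots> = real (n ^ (l - j)) * (\<Sum>Y\<in>tuples n j. (delta n l F Y)\<^sup>2)"
    by (simp add: card_tuples sum_distrib_left)
  finally have e1: "ip n l (Pop n l ?A F) (Pop n l ?A F) = real (n ^ (l - j)) * (\<Sum>Y\<in>tuples n j. (delta n l F Y)\<^sup>2)" .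
  have "ip n l (Pop n l ?A F) (Pop n l ?A F) = ip n l F (Pop n l ?A (Pop n l ?A F))"
    by (metis Pop_selfadj ip_comm)
  also have "\<dots> = ip n l F (Pop n l ?A F)"
    by (rule ip_cong) (simp_all add: Pop_comp)
  finally have e2: "ip n l (Pop n l ?A F) (Pop n l ?A F) = ip n l F (Pop n l ?A F)" .
  have nl: "real (n ^ l) = real (n ^ j) * real (n ^ (l - j))"
    using j by (simp add: power_add[symmetric])
  show ?thesis
    using e1 e2 n unfolding avg_def card_tuples nl by (simp add: field_simps)
qed



definition lin :: "nat \<Rightarrow> nat \<Rightarrow> ((nat list \<Rightarrow> real) \<Rightarrow> real) \<Rightarrow> bool" where
  "lin n l L \<longleftrightarrow> (\<exists>a. \<forall>F. L F = (\<Sum>Y\<in>tuples n l. a Y * F Y))"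

lemma lin_eval: assumes Z: "Z \<in> tuples n l" shows "lin n l (\<lambda>F. F Z)"
  unfolding lin_def
proof (intro exI[of _ "\<lambda>Y. if Y = Z then 1 else 0"] allI)
  fix F :: "nat list \<Rightarrow> real"
  have "(\<Sum>Y\<in>tuples n l. (if Y = Z then 1 else 0) * F Y) = (\<Sum>Y\<in>tuples n l. if Y = Z then F Y else 0)"
    by (intro sum.cong) auto
  also have "\<dots> = F Z" using Z by simp
  finally show "F Z = (\<Sum>Y\<in>tuples n l. (if Y = Z then 1 else 0) * F Y)" by simp
qed

lemma lin_zero: "lin n l (\<lambda>F. 0)"
  unfolding lin_def by (rule exI[of _ "\<lambda>Y. 0"]) simp

lemma lin_add: "lin n l L1 \<Longrightarrow> lin n l L2 \<Longrightarrow> lin n l (\<lambda>F. L1 F + L2 F)"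
  unfolding lin_def
proof (elim exE)
  fix a1 a2 assume "\<forall>F. L1 F = (\<Sum>Y\<in>tuples n l. a1 Y * F Y)" "\<forall>F. L2 F = (\<Sum>Y\<in>tuples n l. a2 Y * F Y)"
  then show "\<exists>a. \<forall>F. L1 F + L2 F = (\<Sum>Y\<in>tuples n l. a Y * F Y)"
    by (intro exI[of _ "\<lambda>Y. a1 Y + a2 Y"]) (simp add: sum.distrib distrib_right)
qed

lemma lin_scale: "lin n l L \<Longrightarrow> lin n l (\<lambda>F. c * L F)"
  unfolding lin_def
proof (elim exE)
  fix a assume "\<forall>F. L F = (\<Sum>Y\<in>tuples n l. a Y * F Y)"
  then show "\<exists>a'. \<forall>F. c * L F = (\<Sum>Y\<in>tuples n l. a' Y * F Y)"
    by (intro exI[of _ "\<lambda>Y. c * a Y"]) (simp add: sum_distrib_left mult.assoc)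
qed

lemma lin_sum: "finite B \<Longrightarrow> (\<And>b. b \<in> B \<Longrightarrow> lin n l (L b)) \<Longrightarrow> lin n l (\<lambda>F. \<Sum>b\<in>B. L b F)"
proof (induction B rule: finite_induct)
  case empty then show ?case by (simp add: lin_zero)
next
  case (insert x B)
  then show ?case using lin_add[of n l "L x" "\<lambda>F. \<Sum>b\<in>B. L b F"] by simp
qed

lemma lin_Pop:
  assumes X: "X \<in> tuples n l" and H: "\<And>Z. Z \<in> tuples n l \<Longrightarrow> lin n l (\<lambda>F. H F Z)"
  shows "lin n l (\<lambda>F. Pop n l A (H F) X)"
proof -
  have "lin n l (\<lambda>F. \<Sum>Y\<in>tuples n l. (1 / real (card (tuples n l))) * H F (repl l A X Y))"
    by (intro lin_sum lin_scale H repl_in X) auto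
  then show ?thesis unfolding Pop_def by (simp add: sum_divide_distrib)
qed

lemma lin_ES:
  assumes X: "X \<in> tuples n l" and U: "U \<subseteq> {..<l}" and H: "\<And>Z. Z \<in> tuples n l \<Longrightarrow> lin n l (\<lambda>F. H F Z)"
  shows "lin n l (\<lambda>F. ES n l U (H F) X)"
  unfolding ES_def
proof (intro lin_sum lin_scale lin_Pop X H)
  show "finite (Pow U)" using U finite_subset by blast
qed

definition sos_form :: "nat \<Rightarrow> nat \<Rightarrow> ((nat list \<Rightarrow> real) \<Rightarrow> real) \<Rightarrow> bool" where
  "sos_form n l P \<longleftrightarrow> (\<exists>(m::nat) (a::nat \<Rightarrow> nat list \<Rightarrow> real) (c::nat \<Rightarrow> real).
      \<forall>F. P F = (\<Sum>k<m. (c k + (\<Sum>Y\<in>tuples n l. a k Y * F Y))\<^sup>2))"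

lemma sos_formI:
  fixes m :: nat
  assumes "\<And>F. P F = (\<Sum>k<m. (c k + (\<Sum>Y\<in>tuples n l. a k Y * F Y))\<^sup>2)"
  shows "sos_form n l P"
  unfolding sos_form_def using assms by blast

lemma sum_split_add: fixes m1 m2 :: nat shows "(\<Sum>k<m1 + m2. f k) = (\<Sum>k<m1. f k) + (\<Sum>k<m2. (f (m1 + k)::real))"
  by (induction m2) simp_all

lemma sos_zero: "sos_form n l (\<lambda>F. 0)"
  unfolding sos_form_def by (rule exI[of _ 0]) simp

lemma sos_sq: assumes "lin n l L" shows "sos_form n l (\<lambda>F. (L F)\<^sup>2)"
proof -
  from assms obtain a where "\<And>F. L F = (\<Sum>Y\<in>tuples n l. a Y * F Y)" unfolding lin_def by blast
  then show ?thesis by (intro sos_formI[where m=1 and c="\<lambda>_. 0" and a="\<lambda>_. a"]) simp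
qed

lemma sos_scale:
  assumes c: "c \<ge> 0" and P: "sos_form n l P"
  shows "sos_form n l (\<lambda>F. c * P F)"
proof -
  from P obtain m :: nat and a c0 where e: "\<And>F. P F = (\<Sum>k<m. (c0 k + (\<Sum>Y\<in>tuples n l. a k Y * F Y))\<^sup>2)"
    unfolding sos_form_def by blast
  have "c * P F = (\<Sum>k<m. (sqrt c * c0 k + (\<Sum>Y\<in>tuples n l. (sqrt c * a k Y) * F Y))\<^sup>2)" for F
  proof -
    have "c * P F = (\<Sum>k<m. (sqrt c * (c0 k + (\<Sum>Y\<in>tuples n l. a k Y * F Y)))\<^sup>2)"
      unfolding e by (simp add: sum_distrib_left power_mult_distrib c)
    also have "\<dots> = (\<Sum>k<m. (sqrt c * c0 k + (\<Sum>Y\<in>tuples n l. (sqrt c * a k Y) * F Y))\<^sup>2)"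
      by (simp add: distrib_left sum_distrib_left mult.assoc)
    finally show ?thesis .
  qed
  then show ?thesis by (rule sos_formI)
qed

lemma sos_add:
  assumes P: "sos_form n l P" and Q: "sos_form n l Q"
  shows "sos_form n l (\<lambda>F. P F + Q F)"
proof -
  from P obtain m1 :: nat and a1 c1 where e1: "\<And>F. P F = (\<Sum>k<m1. (c1 k + (\<Sum>Y\<in>tuples n l. a1 k Y * F Y))\<^sup>2)"
    unfolding sos_form_def by blast
  from Q obtain m2 :: nat and a2 c2 where e2: "\<And>F. Q F = (\<Sum>k<m2. (c2 k + (\<Sum>Y\<in>tuples n l. a2 k Y * F Y))\<^sup>2)"
    unfolding sos_form_def by blast
  define a where "a k = (if k < m1 then a1 k else a2 (k - m1))" for k
  define c where "c k = (if k < m1 then c1 k else c2 (k - m1))" for k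
  have "P F + Q F = (\<Sum>k<m1 + m2. (c k + (\<Sum>Y\<in>tuples n l. a k Y * F Y))\<^sup>2)" for F
  proof -
    have "(\<Sum>k<m1 + m2. (c k + (\<Sum>Y\<in>tuples n l. a k Y * F Y))\<^sup>2) =
       (\<Sum>k<m1. (c k + (\<Sum>Y\<in>tuples n l. a k Y * F Y))\<^sup>2) + (\<Sum>k<m2. (c (m1 + k) + (\<Sum>Y\<in>tuples n l. a (m1 + k) Y * F Y))\<^sup>2)"
      by (rule sum_split_add)
    also have "\<dots> = P F + Q F"
      unfolding e1 e2 a_def c_def by simp
    finally show ?thesis by simp
  qed
  then show ?thesis by (rule sos_formI)
qed

lemma sos_sum: "finite B \<Longrightarrow> (\<And>b. b \<in> B \<Longrightarrow> sos_form n l (P b)) \<Longrightarrow> sos_form n l (\<lambda>F. \<Sum>b\<in>B. P b F)"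
proof (induction B rule: finite_induct)
  case empty then show ?case by (simp add: sos_zero)
next
  case (insert x B)
  then show ?case using sos_add[of n l "P x" "\<lambda>F. \<Sum>b\<in>B. P b F"] by simp
qed

definition ideal_form :: "nat \<Rightarrow> nat \<Rightarrow> ((nat list \<Rightarrow> real) \<Rightarrow> real) \<Rightarrow> bool" where
  "ideal_form n l P \<longleftrightarrow> (\<exists>(q::nat list \<Rightarrow> (nat \<Rightarrow> nat) \<Rightarrow> nat list \<Rightarrow> real) (d::nat list \<Rightarrow> (nat \<Rightarrow> nat) \<Rightarrow> real).
      \<forall>F. P F = (\<Sum>X\<in>tuples n l. \<Sum>\<sigma>\<in>{\<sigma>. \<sigma> permutes {..<l}}.
                   (d X \<sigma> + (\<Sum>Y\<in>tuples n l. q X \<sigma> Y * F Y)) * (F X - F (permute_tuple l \<sigma> X))))"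

lemma ideal_formI:
  assumes "\<And>F. P F = (\<Sum>X\<in>tuples n l. \<Sum>\<sigma>\<in>{\<sigma>. \<sigma> permutes {..<l}}.
                   (d X \<sigma> + (\<Sum>Y\<in>tuples n l. q X \<sigma> Y * F Y)) * (F X - F (permute_tuple l \<sigma> X)))"
  shows "ideal_form n l P"
  unfolding ideal_form_def using assms by blast

lemma ideal_zero: "ideal_form n l (\<lambda>F. 0)"
  unfolding ideal_form_def by (intro exI[of _ "\<lambda>_ _ _. 0"] exI[of _ "\<lambda>_ _. 0"]) simp

lemma ideal_add:
  assumes P: "ideal_form n l P" and Q: "ideal_form n l Q"
  shows "ideal_form n l (\<lambda>F. P F + Q F)"
proof -
  from P obtain q1 d1 where e1: "\<And>F. P F = (\<Sum>X\<in>tuples n l. \<Sum>\<sigma>\<in>{\<sigma>. \<sigma> permutes {..<l}}.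
                   (d1 X \<sigma> + (\<Sum>Y\<in>tuples n l. q1 X \<sigma> Y * F Y)) * (F X - F (permute_tuple l \<sigma> X)))"
    unfolding ideal_form_def by blast
  from Q obtain q2 d2 where e2: "\<And>F. Q F = (\<Sum>X\<in>tuples n l. \<Sum>\<sigma>\<in>{\<sigma>. \<sigma> permutes {..<l}}.
                   (d2 X \<sigma> + (\<Sum>Y\<in>tuples n l. q2 X \<sigma> Y * F Y)) * (F X - F (permute_tuple l \<sigma> X)))"
    unfolding ideal_form_def by blast
  show ?thesis
  proof (rule ideal_formI[where q="\<lambda>X \<sigma> Y. q1 X \<sigma> Y + q2 X \<sigma> Y" and d="\<lambda>X \<sigma>. d1 X \<sigma> + d2 X \<sigma>"])
    fix F :: "nat list \<Rightarrow> real"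
    have inner: "(d1 X \<sigma> + d2 X \<sigma> + (\<Sum>Y\<in>tuples n l. (q1 X \<sigma> Y + q2 X \<sigma> Y) * F Y)) * z =
       (d1 X \<sigma> + (\<Sum>Y\<in>tuples n l. q1 X \<sigma> Y * F Y)) * z + (d2 X \<sigma> + (\<Sum>Y\<in>tuples n l. q2 X \<sigma> Y * F Y)) * z" for X \<sigma> z
      by (simp add: distrib_right sum.distrib algebra_simps)
    show "P F + Q F = (\<Sum>X\<in>tuples n l. \<Sum>\<sigma>\<in>{\<sigma>. \<sigma> permutes {..<l}}.
         (d1 X \<sigma> + d2 X \<sigma> + (\<Sum>Y\<in>tuples n l. (q1 X \<sigma> Y + q2 X \<sigma> Y) * F Y)) * (F X - F (permute_tuple l \<sigma> X)))"
      unfolding inner e1 e2 by (simp add: sum.distrib)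
  qed
qed

lemma ideal_scale:
  assumes P: "ideal_form n l P"
  shows "ideal_form n l (\<lambda>F. c * P F)"
proof -
  from P obtain q1 d1 where e1: "\<And>F. P F = (\<Sum>X\<in>tuples n l. \<Sum>\<sigma>\<in>{\<sigma>. \<sigma> permutes {..<l}}.
                   (d1 X \<sigma> + (\<Sum>Y\<in>tuples n l. q1 X \<sigma> Y * F Y)) * (F X - F (permute_tuple l \<sigma> X)))"
    unfolding ideal_form_def by blast
  show ?thesis
  proof (rule ideal_formI[where q="\<lambda>X \<sigma> Y. c * q1 X \<sigma> Y" and d="\<lambda>X \<sigma>. c * d1 X \<sigma>"])
    fix F :: "nat list \<Rightarrow> real"
    have inner: "(c * d1 X \<sigma> + (\<Sum>Y\<in>tuples n l. c * q1 X \<sigma> Y * F Y)) * z =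
       c * ((d1 X \<sigma> + (\<Sum>Y\<in>tuples n l. q1 X \<sigma> Y * F Y)) * z)" for X \<sigma> z
      by (simp add: sum_distrib_left algebra_simps)
    show "c * P F = (\<Sum>X\<in>tuples n l. \<Sum>\<sigma>\<in>{\<sigma>. \<sigma> permutes {..<l}}.
         (c * d1 X \<sigma> + (\<Sum>Y\<in>tuples n l. c * q1 X \<sigma> Y * F Y)) * (F X - F (permute_tuple l \<sigma> X)))"
      unfolding inner e1 by (simp add: sum_distrib_left)
  qed
qed

lemma ideal_sum: "finite B \<Longrightarrow> (\<And>b. b \<in> B \<Longrightarrow> ideal_form n l (P b)) \<Longrightarrow> ideal_form n l (\<lambda>F. \<Sum>b\<in>B. P b F)"
proof (induction B rule: finite_induct)
  case empty then show ?case by (simp add: ideal_zero)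
next
  case (insert x B)
  then show ?case using ideal_add[of n l "P x" "\<lambda>F. \<Sum>b\<in>B. P b F"] by simp
qed

lemma ideal_base:
  assumes X: "X \<in> tuples n l" and s: "\<sigma> permutes {..<l}" and L: "lin n l L"
  shows "ideal_form n l (\<lambda>F. L F * (F X - F (permute_tuple l \<sigma> X)))"
proof -
  from L obtain a where a: "\<And>F. L F = (\<Sum>Y\<in>tuples n l. a Y * F Y)" unfolding lin_def by blast
  have fp: "finite {\<sigma>. \<sigma> permutes {..<l}}" by (rule finite_permutations) simp
  have "L F * (F X - F (permute_tuple l \<sigma> X)) =
     (\<Sum>X'\<in>tuples n l. \<Sum>\<sigma>'\<in>{\<sigma>. \<sigma> permutes {..<l}}.
       (0 + (\<Sum>Y\<in>tuples n l. (if X' = X \<and> \<sigma>' = \<sigma> then a Y else 0) * F Y)) * (F X' - F (permute_tuple l \<sigma>' X')))" for F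
  proof -
    have "(\<Sum>X'\<in>tuples n l. \<Sum>\<sigma>'\<in>{\<sigma>. \<sigma> permutes {..<l}}.
       (0 + (\<Sum>Y\<in>tuples n l. (if X' = X \<and> \<sigma>' = \<sigma> then a Y else 0) * F Y)) * (F X' - F (permute_tuple l \<sigma>' X')))
      = (\<Sum>X'\<in>tuples n l. \<Sum>\<sigma>'\<in>{\<sigma>. \<sigma> permutes {..<l}}.
       (if X' = X then (if \<sigma>' = \<sigma> then L F * (F X - F (permute_tuple l \<sigma> X)) else 0) else 0))"
      by (intro sum.cong refl) (auto simp: a)
    also have "\<dots> = (\<Sum>X'\<in>tuples n l. if X' = X then L F * (F X - F (permute_tuple l \<sigma> X)) else 0)"
      by (intro sum.cong refl) (use s fp in simp)
    also have "\<dots> = L F * (F X - F (permute_tuple l \<sigma> X))"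
      using X by simp
    finally show ?thesis by simp
  qed
  then show ?thesis by (rule ideal_formI)
qed

lemma sos2_from_forms:
  assumes S: "sos_form n l S" and I: "ideal_form n l J" and e: "\<And>F. P F = S F + J F"
  shows "sos2_proof n l P"
proof -
  from S obtain m :: nat and a c where es: "\<And>F. S F = (\<Sum>k<m. (c k + (\<Sum>Y\<in>tuples n l. a k Y * F Y))\<^sup>2)"
    unfolding sos_form_def by blast
  from I obtain q d where ei: "\<And>F. J F = (\<Sum>X\<in>tuples n l. \<Sum>\<sigma>\<in>{\<sigma>. \<sigma> permutes {..<l}}.
                   (d X \<sigma> + (\<Sum>Y\<in>tuples n l. q X \<sigma> Y * F Y)) * (F X - F (permute_tuple l \<sigma> X)))"
    unfolding ideal_form_def by blast
  show ?thesis unfolding sos2_proof_def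
    by (intro exI[of _ m] exI[of _ a] exI[of _ c] exI[of _ "\<lambda>_. 0"] exI[of _ "\<lambda>_. 0"] exI[of _ q] exI[of _ d])
       (simp add: e es ei)
qed



lemma length_perm[simp]: "length (permute_tuple l \<sigma> X) = l"
  by (simp add: permute_tuple_def)

lemma nth_perm[simp]: "i < l \<Longrightarrow> permute_tuple l \<sigma> X ! i = X ! \<sigma> i"
  by (simp add: permute_tuple_def)

lemma perm_lt: "\<sigma> permutes {..<l} \<Longrightarrow> i < l \<Longrightarrow> \<sigma> i < l"
  using permutes_in_image[of \<sigma> "{..<l}" i] by simp

lemma perm_in: "\<sigma> permutes {..<l} \<Longrightarrow> X \<in> tuples n l \<Longrightarrow> permute_tuple l \<sigma> X \<in> tuples n l"
  by (auto simp: mem_tuples perm_lt)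

lemma perm_bij:
  assumes s: "\<sigma> permutes {..<l}"
  shows "bij_betw (permute_tuple l \<sigma>) (tuples n l) (tuples n l)"
proof (rule bij_betw_byWitness[where f'="permute_tuple l (inv \<sigma>)"])
  have si: "inv \<sigma> permutes {..<l}" using s by (rule permutes_inv)
  show "\<forall>a\<in>tuples n l. permute_tuple l (inv \<sigma>) (permute_tuple l \<sigma> a) = a"
    using s si by (auto simp: mem_tuples perm_lt permutes_inverses intro!: nth_equalityI)
  show "\<forall>a\<in>tuples n l. permute_tuple l \<sigma> (permute_tuple l (inv \<sigma>) a) = a"
    using s si by (auto simp: mem_tuples perm_lt permutes_inverses intro!: nth_equalityI)
  show "permute_tuple l \<sigma> ` tuples n l \<subseteq> tuples n l" using perm_in[OF s] by auto
  show "permute_tuple l (inv \<sigma>) ` tuples n l \<subseteq> tuples n l" using perm_in[OF si] by auto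
qed

lemma sum_perm:
  assumes s: "\<sigma> permutes {..<l}"
  shows "(\<Sum>X\<in>tuples n l. g (permute_tuple l \<sigma> X)) = (\<Sum>X\<in>tuples n l. g X)"
  by (rule sum.reindex_bij_betw[OF perm_bij[OF s]])

lemma perm_repl:
  assumes s: "\<sigma> permutes {..<l}"
  shows "permute_tuple l \<sigma> (repl l (\<sigma> ` A) X Z) = repl l A (permute_tuple l \<sigma> X) (permute_tuple l \<sigma> Z)"
proof (rule nth_equalityI)
  fix i assume "i < length (permute_tuple l \<sigma> (repl l (\<sigma> ` A) X Z))"
  then have i: "i < l" by simp
  have "(\<sigma> i \<in> \<sigma> ` A) = (i \<in> A)" using permutes_inj[OF s] by (auto simp: inj_eq)
  then show "permute_tuple l \<sigma> (repl l (\<sigma> ` A) X Z) ! i = repl l A (permute_tuple l \<sigma> X) (permute_tuple l \<sigma> Z) ! i"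
    using i perm_lt[OF s i] by simp
qed simp

lemma Pop_perm:
  assumes s: "\<sigma> permutes {..<l}" and X: "X \<in> tuples n l"
  shows "Pop n l A F (permute_tuple l \<sigma> X) = Pop n l (\<sigma> ` A) (\<lambda>Y. F (permute_tuple l \<sigma> Y)) X"
proof -
  have "(\<Sum>Z\<in>tuples n l. F (repl l A (permute_tuple l \<sigma> X) Z)) =
        (\<Sum>Z\<in>tuples n l. F (repl l A (permute_tuple l \<sigma> X) (permute_tuple l \<sigma> Z)))"
    by (rule sum_perm[OF s, symmetric])
  also have "\<dots> = (\<Sum>Z\<in>tuples n l. F (permute_tuple l \<sigma> (repl l (\<sigma> ` A) X Z)))"
    by (simp add: perm_repl[OF s])
  finally show ?thesis by (simp add: Pop_def)
qed

lemma ES_perm: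
  assumes s: "\<sigma> permutes {..<l}" and X: "X \<in> tuples n l" and U: "U \<subseteq> {..<l}"
  shows "ES n l U F (permute_tuple l \<sigma> X) = ES n l (\<sigma> ` U) (\<lambda>Y. F (permute_tuple l \<sigma> Y)) X"
proof -
  let ?G = "\<lambda>Y. F (permute_tuple l \<sigma> Y)"
  have inj: "inj \<sigma>" using s by (rule permutes_inj)
  have bU: "bij_betw ((`) \<sigma>) (Pow U) (Pow (\<sigma> ` U))"
    by (rule bij_betw_Pow) (simp add: bij_betw_def inj_on_subset[OF inj subset_UNIV])
  have "ES n l U F (permute_tuple l \<sigma> X) = (\<Sum>B\<in>Pow U. (-1) ^ card (U - B) * Pop n l (\<sigma> ` ({..<l} - B)) ?G X)"
    unfolding ES_def by (simp add: Pop_perm[OF s X])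
  also have "\<dots> = (\<Sum>B\<in>Pow U. (-1) ^ card (\<sigma> ` U - \<sigma> ` B) * Pop n l ({..<l} - \<sigma> ` B) ?G X)"
  proof (intro sum.cong refl)
    fix B assume "B \<in> Pow U"
    have "\<sigma> ` ({..<l} - B) = \<sigma> ` {..<l} - \<sigma> ` B" by (rule image_set_diff[OF inj])
    also have "\<sigma> ` {..<l} = {..<l}" using s by (rule permutes_image)
    finally have e1: "\<sigma> ` ({..<l} - B) = {..<l} - \<sigma> ` B" .
    have "card (\<sigma> ` U - \<sigma> ` B) = card (\<sigma> ` (U - B))" by (simp add: image_set_diff[OF inj])
    also have "\<dots> = card (U - B)" by (rule card_image) (rule inj_on_subset[OF inj subset_UNIV])
    finally show "(-1) ^ card (U - B) * Pop n l (\<sigma> ` ({..<l} - B)) ?G X =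
        (-1) ^ card (\<sigma> ` U - \<sigma> ` B) * Pop n l ({..<l} - \<sigma> ` B) ?G X" using e1 by simp
  qed
  also have "\<dots> = ES n l (\<sigma> ` U) ?G X"
    unfolding ES_def
    by (rule sum.reindex_bij_betw[OF bU, where g="\<lambda>B. (-1) ^ card (\<sigma> ` U - B) * Pop n l ({..<l} - B) ?G X"])
  finally show ?thesis .
qed

lemma wES_perm:
  assumes s: "\<sigma> permutes {..<l}" and U: "U \<subseteq> {..<l}"
  shows "wES n l U F = wES n l (\<sigma> ` U) (\<lambda>Y. F (permute_tuple l \<sigma> Y))"
proof -
  have "wES n l U F = (\<Sum>X\<in>tuples n l. (\<lambda>X. ES n l U F X * ES n l U F X) (permute_tuple l \<sigma> X))"
    unfolding wES_def ip_def by (rule sum_perm[OF s, symmetric])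
  also have "\<dots> = wES n l (\<sigma> ` U) (\<lambda>Y. F (permute_tuple l \<sigma> Y))"
    unfolding wES_def ip_def by (intro sum.cong refl) (simp add: ES_perm[OF s _ U])
  finally show ?thesis .
qed

lemma lin_perm_sum:
  assumes s: "\<sigma> permutes {..<l}" and Z: "Z \<in> tuples n l"
  shows "lin n l (\<lambda>F. F Z + F (permute_tuple l \<sigma> Z))"
  by (intro lin_add lin_eval Z perm_in[OF s])

lemma wES_diff_ideal:
  assumes s: "\<sigma> permutes {..<l}" and V: "V \<subseteq> {..<l}"
  shows "ideal_form n l (\<lambda>F. wES n l V F - wES n l V (\<lambda>Y. F (permute_tuple l \<sigma> Y)))"
proof -
  define L where "L X F = ES n l V (ES n l V (\<lambda>Z. F Z + F (permute_tuple l \<sigma> Z))) X" for X F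
  have eq: "wES n l V F - wES n l V (\<lambda>Y. F (permute_tuple l \<sigma> Y)) =
      (\<Sum>X\<in>tuples n l. L X F * (F X - F (permute_tuple l \<sigma> X)))" for F
  proof -
    let ?G = "\<lambda>Y. F (permute_tuple l \<sigma> Y)"
    have p: "ES n l V (\<lambda>Z. F Z + ?G Z) X = ES n l V F X + ES n l V ?G X" for X
      using ES_lin2[of n l V 1 F 1 ?G X] by simp
    have m: "ES n l V (\<lambda>Z. F Z - ?G Z) X = ES n l V F X - ES n l V ?G X" for X
      using ES_lin2[of n l V 1 F "-1" ?G X] by simp
    have "wES n l V F - wES n l V ?G = ip n l (ES n l V (\<lambda>Z. F Z + ?G Z)) (ES n l V (\<lambda>Z. F Z - ?G Z))"
      unfolding wES_def ip_def p m by (simp add: sum_subtractf[symmetric] algebra_simps)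
    also have "\<dots> = ip n l (ES n l V (ES n l V (\<lambda>Z. F Z + ?G Z))) (\<lambda>Z. F Z - ?G Z)"
      by (metis ES_selfadj ip_comm)
    also have "\<dots> = (\<Sum>X\<in>tuples n l. L X F * (F X - F (permute_tuple l \<sigma> X)))"
      unfolding ip_def L_def by simp
    finally show ?thesis .
  qed
  have "ideal_form n l (\<lambda>F. \<Sum>X\<in>tuples n l. L X F * (F X - F (permute_tuple l \<sigma> X)))"
  proof (intro ideal_sum ideal_base s)
    fix X assume X: "X \<in> tuples n l"
    show "lin n l (L X)" unfolding L_def
      by (intro lin_ES X V lin_perm_sum[OF s]) (intro lin_ES V lin_perm_sum[OF s] | assumption)+
  qed auto
  then show ?thesis unfolding eq by simp
qed

lemma exists_perm_to_initial:
  assumes U: "U \<subseteq> {..<l}"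
  shows "\<exists>\<sigma>. \<sigma> permutes {..<l} \<and> \<sigma> ` U = {..<card U}"
proof -
  let ?k = "card U" let ?I = "{..<l::nat}"
  have fU: "finite U" using U finite_subset by blast
  have kl: "?k \<le> l" using card_mono[OF _ U] by simp
  obtain f where f: "bij_betw f U {..<?k}" using finite_same_card_bij[OF fU, of "{..<?k}"] by auto
  have c2: "card (?I - U) = card (?I - {..<?k})"
    using U kl by (simp add: card_Diff_subset fU)
  obtain g where g: "bij_betw g (?I - U) (?I - {..<?k})"
    using finite_same_card_bij[OF _ _ c2] by auto
  define \<sigma> where "\<sigma> x = (if x \<in> U then f x else if x \<in> ?I then g x else x)" for x
  have b1: "bij_betw \<sigma> U {..<?k}" using f by (rule bij_betw_cong[THEN iffD1, rotated]) (simp add: \<sigma>_def)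
  have b2: "bij_betw \<sigma> (?I - U) (?I - {..<?k})" using g by (rule bij_betw_cong[THEN iffD1, rotated]) (simp add: \<sigma>_def)
  have "bij_betw \<sigma> (U \<union> (?I - U)) ({..<?k} \<union> (?I - {..<?k}))"
    by (rule bij_betw_combine[OF b1 b2]) auto
  moreover have "U \<union> (?I - U) = ?I" "{..<?k} \<union> (?I - {..<?k}) = ?I" using U kl by auto
  ultimately have "bij_betw \<sigma> ?I ?I" by simp
  then have "\<sigma> permutes ?I" by (rule bij_imp_permutes) (use U in \<open>auto simp: \<sigma>_def\<close>)
  moreover have "\<sigma> ` U = {..<?k}" using b1 by (simp add: bij_betw_def)
  ultimately show ?thesis by blast
qed

lemma wES_sym_ideal:
  assumes U: "U \<subseteq> {..<l}"
  shows "ideal_form n l (\<lambda>F. wES n l U F - wES n l {..<card U} F)"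
proof -
  obtain \<sigma> where s: "\<sigma> permutes {..<l}" and img: "\<sigma> ` U = {..<card U}"
    using exists_perm_to_initial[OF U] by blast
  have kI: "{..<card U} \<subseteq> {..<l}" using card_mono[OF _ U] by auto
  have "ideal_form n l (\<lambda>F. (-1) * (wES n l {..<card U} F - wES n l {..<card U} (\<lambda>Y. F (permute_tuple l \<sigma> Y))))"
    by (rule ideal_scale[OF wES_diff_ideal[OF s kI]])
  moreover have "wES n l U F = wES n l {..<card U} (\<lambda>Y. F (permute_tuple l \<sigma> Y))" for F
    using wES_perm[OF s U, of n F] img by simp
  ultimately show ?thesis by simp
qed



lemma main_identity:
  assumes n: "n > 0" and r: "r \<le> l"
  shows "real (card (tuples n l)) * (dirichlet n l \<alpha> F - rhs_bound n l \<alpha> r F) =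
     ip n l F F - ip n l F (Cop n l \<alpha> F) - (1 - (1 - \<alpha>) ^ (r + 1)) * ip n l F F
     + (1 - (1 - \<alpha>) ^ (r + 1)) * (8 ^ r * real (l choose r)) * (\<Sum>j=0..r. ip n l F (Pop n l ({..<l} - {..<j}) F))"
proof -
  let ?N = "real (card (tuples n l))"
  have N: "?N > 0" using n by (simp add: card_tuples)
  have d: "(\<Sum>j=0..r. avg n j (\<lambda>Y. (delta n l F Y)\<^sup>2)) = (\<Sum>j=0..r. ip n l F (Pop n l ({..<l} - {..<j}) F)) / ?N"
    unfolding sum_divide_distrib by (intro sum.cong refl) (use r n in \<open>simp add: avg_delta\<close>)
  have a: "avg n l F + avg n l (\<lambda>X. (F X)\<^sup>2 - F X) = ip n l F F / ?N"
    unfolding avg_def ip_def by (simp add: sum_subtractf power2_eq_square add_divide_distrib[symmetric])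
  have di: "dirichlet n l \<alpha> F = (ip n l F F - ip n l F (Cop n l \<alpha> F)) / ?N"
    unfolding dirichlet_def avg_def ip_def by (simp add: sum_subtractf algebra_simps)
  have rh: "rhs_bound n l \<alpha> r F = (1 - (1 - \<alpha>) ^ (r + 1)) * (ip n l F F / ?N
      - 8 ^ r * real (l choose r) * ((\<Sum>j=0..r. ip n l F (Pop n l ({..<l} - {..<j}) F)) / ?N))"
    unfolding rhs_bound_def d a[symmetric] by simp
  have gen: "N * ((x - y) / N - b * (x / N - k * (s / N))) = x - y - b * x + b * k * s"
    if "N \<noteq> 0" for N x y b k s :: real using that by (simp add: field_simps)
  show ?thesis unfolding di rh by (rule gen) (simp add: card_tuples n)
qed

lemma sum_group_card:
  fixes g :: "nat \<Rightarrow> real" and l r :: nat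
  assumes r: "r \<le> l"
  shows "(\<Sum>U\<in>{U\<in>Pow {..<l}. card U \<le> r}. g (card U)) = (\<Sum>j=0..r. real (l choose j) * g j)"
proof -
  have "(\<Sum>U\<in>{U\<in>Pow {..<l}. card U \<le> r}. g (card U)) =
     (\<Sum>j\<in>{0..r}. \<Sum>U\<in>{U\<in>{U\<in>Pow {..<l}. card U \<le> r}. card U = j}. g (card U))"
    by (rule sum.group[symmetric]) auto
  also have "\<dots> = (\<Sum>j=0..r. real (l choose j) * g j)"
  proof (intro sum.cong refl)
    fix j assume j: "j \<in> {0..r}"
    have "{U\<in>{U\<in>Pow {..<l}. card U \<le> r}. card U = j} = {U. U \<subseteq> {..<l} \<and> card U = j}" using j by auto
    moreover have "card {U. U \<subseteq> {..<l} \<and> card U = j} = l choose j" using n_subsets[of "{..<l}" j] by simp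
    ultimately show "(\<Sum>U\<in>{U\<in>{U\<in>Pow {..<l}. card U \<le> r}. card U = j}. g (card U)) = real (l choose j) * g j"
      by simp
  qed
  finally show ?thesis .
qed

lemma binom_ratio:
  fixes l m u :: nat
  assumes "u \<le> l" "m \<le> l" "l > 0"
  shows "real ((l - u) choose m) \<le> (1 - real m / real l) ^ u * real (l choose m)"
  using assms(1)
proof (induction u)
  case 0 then show ?case by simp
next
  case (Suc u)
  let ?a = "l - u"
  have a1: "?a \<ge> 1" using Suc.prems by simp
  have IH: "real (?a choose m) \<le> (1 - real m / real l) ^ u * real (l choose m)" using Suc by simp
  have q0: "0 \<le> 1 - real m / real l" using assms by (simp add: field_simps)
  have e: "real (?a - m) * real (?a choose m) = real ?a * real ((?a - 1) choose m)"
    using binomial_absorb_comp[of ?a m] by (metis of_nat_mult)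
  have le: "real (?a - m) \<le> real ?a * (1 - real m / real l)"
  proof (cases "m \<le> ?a")
    case True
    have "real ?a * real m \<le> real l * real m" by (intro mult_right_mono) auto
    then have h: "real ?a * (real m / real l) \<le> real m" using assms by (simp add: field_simps)
    have "real (?a - m) = real ?a - real m" using True by (simp add: of_nat_diff)
    moreover have "real ?a * (1 - real m / real l) = real ?a - real ?a * (real m / real l)"
      by (simp add: algebra_simps)
    ultimately show ?thesis using h by linarith
  next
    case False then show ?thesis using q0 by simp
  qed
  have "real ?a * real ((?a - 1) choose m) \<le> real ?a * (1 - real m / real l) * real (?a choose m)"
    unfolding e[symmetric] by (rule mult_right_mono[OF le]) simp
  then have h2: "real ?a * real ((?a - 1) choose m) \<le> real ?a * ((1 - real m / real l) * real (?a choose m))"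
    by (simp only: mult.assoc)
  have pos: "real ?a > 0" using a1 by simp
  have "real ((?a - 1) choose m) \<le> (1 - real m / real l) * real (?a choose m)"
    using h2 mult_le_cancel_left_pos[OF pos] by blast
  also have "\<dots> \<le> (1 - real m / real l) * ((1 - real m / real l) ^ u * real (l choose m))"
    by (rule mult_left_mono[OF IH q0])
  finally have "real ((?a - 1) choose m) \<le> (1 - real m / real l) ^ (Suc u) * real (l choose m)"
    by (simp only: power_Suc mult.assoc)
  moreover have "?a - 1 = l - Suc u" by simp
  ultimately show ?case by simp
qed



lemma ws_eq:
  assumes "\<alpha> * real l = real m"
  shows "weight_sets \<alpha> l = {S. S \<subseteq> {..<l} \<and> card S = m}"
  unfolding weight_sets_def using assms by auto

lemma card_ws:
  assumes "\<alpha> * real l = real m"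
  shows "card (weight_sets \<alpha> l) = l choose m"
  unfolding ws_eq[OF assms] using n_subsets[of "{..<l}" m] by simp

lemma card_ws_avoid:
  assumes "\<alpha> * real l = real m" and U: "U \<subseteq> {..<l}"
  shows "card {S\<in>weight_sets \<alpha> l. S \<inter> U = {}} = (l - card U) choose m"
proof -
  have "{S\<in>weight_sets \<alpha> l. S \<inter> U = {}} = {S. S \<subseteq> {..<l} - U \<and> card S = m}"
    unfolding ws_eq[OF assms(1)] by auto
  moreover have "card ({..<l} - U) = l - card U"
    using U by (simp add: card_Diff_subset finite_subset)
  ultimately show ?thesis using n_subsets[of "{..<l} - U" m] by simp
qed

lemma mu_bounds:
  assumes "\<alpha> * real l = real m" and "m \<le> l"
  shows "0 \<le> mu \<alpha> l U" "mu \<alpha> l U \<le> 1"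
proof -
  have fin: "finite (weight_sets \<alpha> l)" by (rule finite_weight_sets)
  have pos: "card (weight_sets \<alpha> l) > 0" using card_ws[OF assms(1)] assms(2) by simp
  have "card {S\<in>weight_sets \<alpha> l. S \<inter> U = {}} \<le> card (weight_sets \<alpha> l)"
    by (rule card_mono[OF fin]) auto
  then show "0 \<le> mu \<alpha> l U" "mu \<alpha> l U \<le> 1" unfolding mu_def using pos by (auto simp: divide_le_eq_1)
qed

lemma mu_hi:
  assumes am: "\<alpha> * real l = real m" and ml: "m \<le> l" and l: "l > 0" and U: "U \<subseteq> {..<l}"
    and rU: "r < card U" and a1: "\<alpha> \<le> 1"
  shows "mu \<alpha> l U \<le> (1 - \<alpha>) ^ (r + 1)"
proof -
  have al: "\<alpha> = real m / real l" using am l by (simp add: field_simps)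
  have cU: "card U \<le> l" using card_mono[OF _ U] by simp
  have pos: "real (l choose m) > 0" using ml by simp
  have "mu \<alpha> l U = real ((l - card U) choose m) / real (l choose m)"
    unfolding mu_def card_ws_avoid[OF am U] card_ws[OF am] ..
  also have "\<dots> \<le> (1 - real m / real l) ^ card U"
    using binom_ratio[OF cU ml l] pos by (simp add: divide_le_eq)
  also have "\<dots> \<le> (1 - real m / real l) ^ (r + 1)"
    by (rule power_decreasing) (use rU a1 al in auto)
  finally show ?thesis using al by simp
qed

lemma wES_sos:
  assumes U: "U \<subseteq> {..<l}"
  shows "sos_form n l (wES n l U)"
proof -
  have "sos_form n l (\<lambda>F. \<Sum>X\<in>tuples n l. (ES n l U F X)\<^sup>2)"
    by (intro sos_sum sos_sq lin_ES U lin_eval) auto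
  moreover have "wES n l U = (\<lambda>F. \<Sum>X\<in>tuples n l. (ES n l U F X)\<^sup>2)"
    by (simp add: wES_def ip_def power2_eq_square fun_eq_iff)
  ultimately show ?thesis by simp
qed

lemma sos2_nonneg:
  assumes P: "sos2_proof n l P" and B: "\<forall>X\<in>tuples n l. 0 \<le> F X \<and> F X \<le> 1" and inv: "perm_invariant n l F"
  shows "0 \<le> P F"
proof -
  from P obtain m :: nat and a c lam mu q d where
    nn: "\<forall>X\<in>tuples n l. lam X \<ge> 0 \<and> mu X \<ge> 0" and
    e: "\<forall>F::nat list \<Rightarrow> real.
          P F = (\<Sum>k<m. (c k + (\<Sum>Y\<in>tuples n l. a k Y * F Y))\<^sup>2)
              + (\<Sum>X\<in>tuples n l. lam X * F X + mu X * (1 - F X))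
              + (\<Sum>X\<in>tuples n l. \<Sum>\<sigma>\<in>{\<sigma>. \<sigma> permutes {..<l}}.
                   (d X \<sigma> + (\<Sum>Y\<in>tuples n l. q X \<sigma> Y * F Y)) * (F X - F (permute_tuple l \<sigma> X)))"
    unfolding sos2_proof_def by blast
  have t1: "0 \<le> (\<Sum>k<m. (c k + (\<Sum>Y\<in>tuples n l. a k Y * F Y))\<^sup>2)" by (intro sum_nonneg) simp
  have t2: "0 \<le> (\<Sum>X\<in>tuples n l. lam X * F X + mu X * (1 - F X))"
    using nn B by (intro sum_nonneg add_nonneg_nonneg mult_nonneg_nonneg) auto
  have t3: "(\<Sum>X\<in>tuples n l. \<Sum>\<sigma>\<in>{\<sigma>. \<sigma> permutes {..<l}}.
                   (d X \<sigma> + (\<Sum>Y\<in>tuples n l. q X \<sigma> Y * F Y)) * (F X - F (permute_tuple l \<sigma> X))) = 0"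
    using inv unfolding perm_invariant_def by (intro sum.neutral ballI) auto
  show ?thesis using e t1 t2 t3 by simp
qed



theorem theoremC1:
  fixes \<alpha> :: real and l n r :: nat
  assumes "0 < \<alpha>" and "\<alpha> < 1"
    and "real l \<ge> 1 / \<alpha>"
    and "\<alpha> * real l \<in> \<nat>"
    and "n \<ge> l"
    and "1 \<le> r" and "2 * r \<le> l"
  shows "sos2_proof n l (\<lambda>F. dirichlet n l \<alpha> F - rhs_bound n l \<alpha> r F)
     \<and> (\<forall>F. perm_invariant n l F \<and> (\<forall>X\<in>tuples n l. 0 \<le> F X \<and> F X \<le> 1)
            \<longrightarrow> dirichlet n l \<alpha> F \<ge> rhs_bound n l \<alpha> r F)"
proof -
  obtain m :: nat where am: "\<alpha> * real l = real m"
    using assms(4) Nats_cases by metis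
  have lpos: "l > 0"
  proof -
    have "1 / \<alpha> > 0" using assms(1) by simp
    then have "real l > 0" using assms(3) by linarith
    then show ?thesis by simp
  qed
  have npos: "n > 0" using lpos assms(5) by simp
  have ml: "m \<le> l"
  proof -
    have "\<alpha> * real l \<le> 1 * real l" by (rule mult_right_mono) (use assms(2) in auto)
    then have "real m \<le> real l" using am by simp
    then show ?thesis by simp
  qed
  have rl: "r \<le> l" using assms(7) by simp
  define b where "b = 1 - (1 - \<alpha>) ^ (r + 1)"
  define K where "K = 8 ^ r * real (l choose r)"
  have b0: "b \<ge> 0"
  proof -
    have "(1 - \<alpha>) ^ (r + 1) \<le> 1" by (rule power_le_one) (use assms(1,2) in auto)
    then show ?thesis unfolding b_def by linarith
  qed
  have K_ge: "real (l choose j) \<le> K" if "j \<le> r" for j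
  proof -
    have "l choose j \<le> l choose r" by (rule binomial_mono[OF that assms(7)])
    moreover have "(1::real) \<le> 8 ^ r" by simp
    ultimately have "real (l choose j) * 1 \<le> real (l choose r) * 8 ^ r"
      by (intro mult_mono) auto
    then show ?thesis unfolding K_def by (simp add: mult.commute)
  qed
  have K0: "K \<ge> 0" unfolding K_def by simp
  define Pw where "Pw = Pow {..<l}"
  define Hi where "Hi = {U\<in>Pow {..<l}. r < card U}"
  define Lo where "Lo = {U\<in>Pow {..<l}. card U \<le> r}"
  define Sj where "Sj j = {U\<in>Pow {..<l}. U \<inter> ({..<l} - {..<j}) = {}}" for j
  define c where "c U = 1 - mu \<alpha> l U - b" for U
  define N where "N = real (card (tuples n l))"
  have Npos: "N > 0" unfolding N_def using npos by (simp add: card_tuples)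
  define SF where "SF F = (\<Sum>U\<in>Hi. c U * wES n l U F) + (\<Sum>U\<in>Lo. (1 - mu \<alpha> l U) * wES n l {..<card U} F)
      + (b * K) * (\<Sum>j=0..r. \<Sum>U\<in>Sj j - {{..<j}}. wES n l U F)
      + b * (\<Sum>j=0..r. (K - real (l choose j)) * wES n l {..<j} F)" for F
  define JF where "JF F = (\<Sum>U\<in>Lo. c U * (wES n l U F - wES n l {..<card U} F))" for F
  have fin: "finite Pw" "finite Hi" "finite Lo" "\<And>j. finite (Sj j)"
    unfolding Pw_def Hi_def Lo_def Sj_def by auto
  have key: "N * (dirichlet n l \<alpha> F - rhs_bound n l \<alpha> r F) = SF F + JF F" for F
  proof -
    let ?w = "\<lambda>U. wES n l U F"
    have e0: "N * (dirichlet n l \<alpha> F - rhs_bound n l \<alpha> r F) =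
       ip n l F F - ip n l F (Cop n l \<alpha> F) - b * ip n l F F + b * K * (\<Sum>j=0..r. ip n l F (Pop n l ({..<l} - {..<j}) F))"
      unfolding N_def b_def K_def by (rule main_identity[OF npos rl])
    have e1: "ip n l F F = (\<Sum>U\<in>Pw. ?w U)" unfolding Pw_def by (rule ip_self[OF npos])
    have e2: "ip n l F (Cop n l \<alpha> F) = (\<Sum>U\<in>Pw. ?w U * mu \<alpha> l U)" unfolding Pw_def by (rule ip_Cop[OF npos])
    have e3: "(\<Sum>j=0..r. ip n l F (Pop n l ({..<l} - {..<j}) F)) = (\<Sum>j=0..r. \<Sum>U\<in>Sj j. ?w U)"
      unfolding Sj_def by (intro sum.cong refl ip_Pop_decomp npos) auto
    have s1: "(\<Sum>U\<in>Pw. ?w U) - (\<Sum>U\<in>Pw. ?w U * mu \<alpha> l U) - b * (\<Sum>U\<in>Pw. ?w U) = (\<Sum>U\<in>Pw. c U * ?w U)"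
    proof -
      have "(\<Sum>U\<in>Pw. c U * ?w U) = (\<Sum>U\<in>Pw. ?w U - ?w U * mu \<alpha> l U - b * ?w U)"
        unfolding c_def by (intro sum.cong refl) (simp add: algebra_simps)
      also have "\<dots> = (\<Sum>U\<in>Pw. ?w U) - (\<Sum>U\<in>Pw. ?w U * mu \<alpha> l U) - b * (\<Sum>U\<in>Pw. ?w U)"
        by (simp add: sum_subtractf sum_distrib_left)
      finally show ?thesis by simp
    qed
    have s2: "(\<Sum>U\<in>Pw. c U * ?w U) = (\<Sum>U\<in>Hi. c U * ?w U) + (\<Sum>U\<in>Lo. c U * ?w U)"
    proof -
      have "Pw = Hi \<union> Lo" "Hi \<inter> Lo = {}" unfolding Pw_def Hi_def Lo_def by auto
      then show ?thesis using fin by (simp add: sum.union_disjoint)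
    qed
    have s3: "(\<Sum>U\<in>Lo. c U * ?w U) = JF F + (\<Sum>U\<in>Lo. (1 - mu \<alpha> l U) * ?w {..<card U}) - b * (\<Sum>U\<in>Lo. ?w {..<card U})"
    proof -
      have "(\<Sum>U\<in>Lo. c U * ?w U) = (\<Sum>U\<in>Lo. c U * (?w U - ?w {..<card U}) + (1 - mu \<alpha> l U) * ?w {..<card U} - b * ?w {..<card U})"
        unfolding c_def by (intro sum.cong refl) (simp add: algebra_simps)
      also have "\<dots> = JF F + (\<Sum>U\<in>Lo. (1 - mu \<alpha> l U) * ?w {..<card U}) - b * (\<Sum>U\<in>Lo. ?w {..<card U})"
        unfolding JF_def by (simp add: sum.distrib sum_subtractf sum_distrib_left)
      finally show ?thesis .
    qed
    have s4: "(\<Sum>U\<in>Lo. ?w {..<card U}) = (\<Sum>j=0..r. real (l choose j) * ?w {..<j})"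
      unfolding Lo_def by (rule sum_group_card[OF rl, of "\<lambda>j. ?w {..<j}"])
    have s5: "(\<Sum>j=0..r. \<Sum>U\<in>Sj j. ?w U) = (\<Sum>j=0..r. ?w {..<j}) + (\<Sum>j=0..r. \<Sum>U\<in>Sj j - {{..<j}}. ?w U)"
    proof -
      have "(\<Sum>U\<in>Sj j. ?w U) = ?w {..<j} + (\<Sum>U\<in>Sj j - {{..<j}}. ?w U)" if "j \<in> {0..r}" for j
      proof (rule sum.remove[OF fin(4)])
        show "{..<j} \<in> Sj j" using that rl unfolding Sj_def by auto
      qed
      then show ?thesis by (simp add: sum.distrib)
    qed
    have s6: "b * (\<Sum>j=0..r. (K - real (l choose j)) * ?w {..<j}) = b * K * (\<Sum>j=0..r. ?w {..<j}) - b * (\<Sum>j=0..r. real (l choose j) * ?w {..<j})"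
      by (simp add: sum_subtractf sum_distrib_left algebra_simps)
    show ?thesis
      unfolding e0 e1 e2 e3 SF_def
      using s1 s2 s3 s4 s5 s6 by (simp add: algebra_simps)
  qed
  have sosS: "sos_form n l SF"
  proof -
    have A: "sos_form n l (\<lambda>F. \<Sum>U\<in>Hi. c U * wES n l U F)"
    proof (intro sos_sum sos_scale wES_sos fin)
      fix U assume U: "U \<in> Hi"
      then show "U \<subseteq> {..<l}" unfolding Hi_def by auto
      show "0 \<le> c U" unfolding c_def b_def
        using mu_hi[OF am ml lpos, of U r] U assms(2) unfolding Hi_def by auto
    qed
    have B: "sos_form n l (\<lambda>F. \<Sum>U\<in>Lo. (1 - mu \<alpha> l U) * wES n l {..<card U} F)"
    proof (intro sos_sum sos_scale wES_sos fin)
      fix U assume U: "U \<in> Lo"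
      then show "{..<card U} \<subseteq> {..<l}" unfolding Lo_def using rl by auto
      show "0 \<le> 1 - mu \<alpha> l U" using mu_bounds[OF am ml] by simp
    qed
    have C: "sos_form n l (\<lambda>F. (b * K) * (\<Sum>j=0..r. \<Sum>U\<in>Sj j - {{..<j}}. wES n l U F))"
      by (intro sos_scale sos_sum wES_sos mult_nonneg_nonneg b0 K0) (auto simp: fin Sj_def)
    have D: "sos_form n l (\<lambda>F. b * (\<Sum>j=0..r. (K - real (l choose j)) * wES n l {..<j} F))"
      by (intro sos_scale sos_sum wES_sos b0) (use K_ge rl in auto)
    have "sos_form n l (\<lambda>F. (\<Sum>U\<in>Hi. c U * wES n l U F) + (\<Sum>U\<in>Lo. (1 - mu \<alpha> l U) * wES n l {..<card U} F)
      + (b * K) * (\<Sum>j=0..r. \<Sum>U\<in>Sj j - {{..<j}}. wES n l U F)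
      + b * (\<Sum>j=0..r. (K - real (l choose j)) * wES n l {..<j} F))"
      by (intro sos_add A B C D)
    then show ?thesis unfolding SF_def[abs_def] .
  qed
  have idJ: "ideal_form n l JF"
  proof -
    have "ideal_form n l (\<lambda>F. \<Sum>U\<in>Lo. c U * (wES n l U F - wES n l {..<card U} F))"
      by (intro ideal_sum ideal_scale wES_sym_ideal fin) (auto simp: Lo_def)
    then show ?thesis unfolding JF_def[abs_def] .
  qed
  have part1: "sos2_proof n l (\<lambda>F. dirichlet n l \<alpha> F - rhs_bound n l \<alpha> r F)"
  proof (rule sos2_from_forms[OF sos_scale[OF _ sosS] ideal_scale[OF idJ]])
    show "0 \<le> 1 / N" using Npos by simp
    fix F
    show "dirichlet n l \<alpha> F - rhs_bound n l \<alpha> r F = 1 / N * SF F + 1 / N * JF F"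
      using key[of F] Npos by (simp add: field_simps)
  qed
  moreover have "\<forall>F. perm_invariant n l F \<and> (\<forall>X\<in>tuples n l. 0 \<le> F X \<and> F X \<le> 1)
            \<longrightarrow> dirichlet n l \<alpha> F \<ge> rhs_bound n l \<alpha> r F"
  proof (intro allI impI)
    fix F :: "nat list \<Rightarrow> real"
    assume h: "perm_invariant n l F \<and> (\<forall>X\<in>tuples n l. 0 \<le> F X \<and> F X \<le> 1)"
    have "0 \<le> dirichlet n l \<alpha> F - rhs_bound n l \<alpha> r F"
      using sos2_nonneg[OF part1, of F] h by simp
    then show "dirichlet n l \<alpha> F \<ge> rhs_bound n l \<alpha> r F" by simp
  qed
  ultimately show ?thesis by blast
qed


end
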